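(* Let $P\subseteq\mathbb{R}^n$ be a rational polyhedron, $X\subseteq P$ a closed set, and $\eta\colon P\to\mathbb{R}^2$ a $\mathbb{Z}$-map. If $\eta(X)$ has a rationally outgoing $1$-tangent (at some point), then for some $k\in\{1,\ldots,n-1\}$ the set $X$ has a rationally outgoing $k$-tangent (at some point).
   Context: A rational polyhedron is a finite union of rational simplexes (simplexes whose vertices have rational coordinates). A map $\eta\colon P\to\mathbb{R}^m$ on a rational polyhedron $P$ is a $\mathbb{Z}$-map if there is a triangulation of $P$ such that on each simplex $\eta$ coincides with an affine map $\mathbb{R}^n\to\mathbb{R}^m$ with integer coefficients. $k$-tangents: Let $u=(u_1,\ldots,u_k)$ be a $k$-tuple of pairwise orthogonal unit vectors in $\mathbb{R}^N$ and for $l\le k$ let $\mathsf{p}_l$ be the orthogonal projection onto $\mathbb{R}u_1+\cdots+\mathbb{R}u_l$ ($\mathsf p_0=0$). Given $X\subseteq\mathbb{R}^N$ and $x\in\mathbb{R}^N$, $u$ is a $k$-tangent of $X$ at $x$ if there is a sequence $x_1,x_2,\ldots$ in $X$ converging to $x$ such that no vector $x_i-x$ lies in $\mathbb{R}u_1+\cdots+\mathbb{R}u_k$ and, setting $x_i^1=(x_i-x)/\|x_i-x\|$ and $x_i^l=\dfrac{x_i-x-\mathsf{p}_{l-1}(x_i-x)}{\|x_i-x-\mathsf{p}_{l-1}(x_i-x)\|}$ for $l\le k$, we have $\lim_{i\to\infty}x_i^s=u_s$ for each $s$. For $\lambda\in\mathbb{R}_{>0}^k$, $C_{x,u,\lambda}=\mathrm{conv}(x,\,x+\lambda_1u_1,\,\ldots,\,x+\lambda_1u_1+\cdots+\lambda_ku_k)$.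 A $k$-tangent $u$ of $X$ at $x$ is rationally outgoing if there exist a rational simplex $S$, a face $F$ of $S$, and $\lambda\in\mathbb{R}_{>0}^k$ such that $C_{x,u,\lambda}\subseteq S$, $C_{x,u,\lambda}\not\subseteq F$, and $F\cap X=S\cap X$. (For $N=2$, $k=1$ this means there is a $1$-tangent $u$ at $x$ and $\epsilon>0$ with $\mathrm{conv}(x,x+\epsilon u)$ having rational endpoints and meeting the set only in $x$.) *)

theory Defs
  imports "HOL-Analysis.Analysis"
begin

definition rational_point :: "real^'n \<Rightarrow> bool" where
  "rational_point v \<longleftrightarrow> (\<forall>i. v $ i \<in> \<rat>)"

definition rational_simplex :: "(real^'n) set \<Rightarrow> bool" where
  "rational_simplex S \<longleftrightarrow> (\<exists>C. finite C \<and> \<not> affine_dependent C \<and>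
      (\<forall>v\<in>C. rational_point v) \<and> S = convex hull C)"

definition rational_polyhedron :: "(real^'n) set \<Rightarrow> bool" where
  "rational_polyhedron P \<longleftrightarrow> (\<exists>\<K>. finite \<K> \<and> (\<forall>S\<in>\<K>. rational_simplex S) \<and> P = \<Union>\<K>)"

definition triangulation :: "(real^'n) set set \<Rightarrow> (real^'n) set \<Rightarrow> bool" where
  "triangulation \<K> P \<longleftrightarrow> finite \<K> \<and> (\<forall>S\<in>\<K>. rational_simplex S) \<and> \<Union>\<K> = P \<and>
     (\<forall>S\<in>\<K>. \<forall>T\<in>\<K>. (S \<inter> T) face_of S \<and> (S \<inter> T) face_of T)"

definition Z_map :: "(real^'n) set \<Rightarrow> (real^'n \<Rightarrow> real^'m) \<Rightarrow> bool" where
  "Z_map P \<eta> \<longleftrightarrow> (\<exists>\<K>. triangulation \<K> P \<and>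
     (\<forall>S\<in>\<K>. \<exists>(A::real^'n^'m) (b::real^'m).
        (\<forall>i j. A $ i $ j \<in> \<int>) \<and> (\<forall>i. b $ i \<in> \<int>) \<and>
        (\<forall>x\<in>S. \<eta> x = A *v x + b)))"

text \<open>u is indexed by 1..k. Orthogonal projection onto span of u 1, ..., u l
  (for an orthonormal family).\<close>
definition proj_first :: "(nat \<Rightarrow> real^'n) \<Rightarrow> nat \<Rightarrow> real^'n \<Rightarrow> real^'n" where
  "proj_first u l v = (\<Sum>j=1..l. (v \<bullet> u j) *\<^sub>R u j)"

definition orthonormal_tuple :: "nat \<Rightarrow> (nat \<Rightarrow> real^'n) \<Rightarrow> bool" where
  "orthonormal_tuple k u \<longleftrightarrow> (\<forall>i\<in>{1..k}. norm (u i) = 1) \<and>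
     (\<forall>i\<in>{1..k}. \<forall>j\<in>{1..k}. i \<noteq> j \<longrightarrow> u i \<bullet> u j = 0)"

definition k_tangent :: "(real^'n) set \<Rightarrow> real^'n \<Rightarrow> nat \<Rightarrow> (nat \<Rightarrow> real^'n) \<Rightarrow> bool" where
  "k_tangent X x k u \<longleftrightarrow> orthonormal_tuple k u \<and>
     (\<exists>xs::nat \<Rightarrow> real^'n. (\<forall>i. xs i \<in> X) \<and> xs \<longlonglongrightarrow> x \<and>
        (\<forall>i. xs i - x \<notin> span (u ` {1..k})) \<and>
        (\<forall>s\<in>{1..k}. (\<lambda>i. (xs i - x - proj_first u (s - 1) (xs i - x)) /\<^sub>R
                          norm (xs i - x - proj_first u (s - 1) (xs i - x))) \<longlonglongrightarrow> u s))"

definition C_set :: "real^'n \<Rightarrow> nat \<Rightarrow> (nat \<Rightarrow> real^'n) \<Rightarrow> (nat \<Rightarrow> real) \<Rightarrow> (real^'n) set" where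
  "C_set x k u lam = convex hull {x + (\<Sum>j=1..m. lam j *\<^sub>R u j) | m. m \<le> k}"

definition rationally_outgoing :: "(real^'n) set \<Rightarrow> real^'n \<Rightarrow> nat \<Rightarrow> (nat \<Rightarrow> real^'n) \<Rightarrow> bool" where
  "rationally_outgoing X x k u \<longleftrightarrow> k_tangent X x k u \<and>
     (\<exists>S F lam. rational_simplex S \<and> F face_of S \<and> (\<forall>j\<in>{1..k}. lam j > 0) \<and>
        C_set x k u lam \<subseteq> S \<and> \<not> C_set x k u lam \<subseteq> F \<and> F \<inter> X = S \<inter> X)"

end

theory Submission
  imports Defs
begin


lemma lowest_term_tendsto:
  fixes c :: "nat \<Rightarrow> real"
  assumes "1 \<le> l" "l \<le> k" "\<And>j. 1 \<le> j \<Longrightarrow> j < l \<Longrightarrow> c j = 0"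
  shows "((\<lambda>e. (\<Sum>j=1..k. c j * e^j) / e^l) \<longlongrightarrow> c l) (at_right 0)"
proof -
  let ?g = "\<lambda>e::real. \<Sum>j=l..k. c j * e^(j-l)"
  have cont: "continuous_on UNIV ?g" by (intro continuous_intros)
  have g0: "?g 0 = c l"
  proof -
    have "?g 0 = c l * 0^(l-l) + (\<Sum>j=Suc l..k. c j * 0^(j-l))"
      using assms by (simp add: sum.atLeast_Suc_atMost)
    also have "\<dots> = c l" by (auto intro!: sum.neutral)
    finally show ?thesis .
  qed
  have "(?g \<longlongrightarrow> ?g 0) (at_right 0)"
    using cont by (meson UNIV_I continuous_on_def filterlim_at_split tendsto_at_iff_tendsto_nhds_within)
  then have lim: "(?g \<longlongrightarrow> c l) (at_right 0)" using g0 by simp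
  have eq: "(\<Sum>j=1..k. c j * e^j) / e^l = ?g e" if "e > 0" for e :: real
  proof -
    have "(\<Sum>j=1..k. c j * e^j) = (\<Sum>j\<in>{1..<l}. c j * e^j) + (\<Sum>j=l..k. c j * e^j)"
      using assms by (subst sum.union_disjoint[symmetric]) (auto intro!: sum.cong)
    also have "\<dots> = (\<Sum>j=l..k. c j * e^j)" using assms by simp
    also have "\<dots> = e^l * ?g e"
      unfolding sum_distrib_left
      by (rule sum.cong) (auto simp: power_add[symmetric])
    finally show ?thesis using that by simp
  qed
  show ?thesis
    apply (rule Lim_transform_eventually[OF lim])
    using eq by (auto simp: eventually_at_right_field intro!: exI[of _ 1])
qed

lemma lowest_term_sign:
  fixes c :: "nat \<Rightarrow> real"
  assumes "1 \<le> l" "l \<le> k" "\<And>j. 1 \<le> j \<Longrightarrow> j < l \<Longrightarrow> c j = 0"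
  shows "c l < 0 \<Longrightarrow> eventually (\<lambda>e. (\<Sum>j=1..k. c j * e^j) < 0) (at_right 0)"
    and "c l > 0 \<Longrightarrow> eventually (\<lambda>e. (\<Sum>j=1..k. c j * e^j) > 0) (at_right 0)"
proof -
  note L = lowest_term_tendsto[OF assms]
  have pos: "eventually (\<lambda>e::real. e > 0) (at_right 0)" by (simp add: eventually_at_right_less)
  show "c l < 0 \<Longrightarrow> eventually (\<lambda>e. (\<Sum>j=1..k. c j * e^j) < 0) (at_right 0)"
  proof -
    assume "c l < 0"
    with L have "eventually (\<lambda>e. (\<Sum>j=1..k. c j * e^j) / e^l < 0) (at_right 0)"
      by (rule order_tendstoD)
    then show ?thesis using pos
      by eventually_elim (auto simp: divide_less_0_iff)
  qed
  show "c l > 0 \<Longrightarrow> eventually (\<lambda>e. (\<Sum>j=1..k. c j * e^j) > 0) (at_right 0)"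
  proof -
    assume "c l > 0"
    with L have "eventually (\<lambda>e. (\<Sum>j=1..k. c j * e^j) / e^l > 0) (at_right 0)"
      by (rule order_tendstoD)
    then show ?thesis using pos
      by eventually_elim (auto simp: zero_less_divide_iff)
  qed
qed

definition lexok :: "nat \<Rightarrow> (nat \<Rightarrow> real) \<Rightarrow> bool" where
  "lexok k c \<longleftrightarrow> (\<forall>l\<in>{1..k}. (\<forall>j\<in>{1..<l}. c j = 0) \<longrightarrow> c l \<le> 0)"

lemma lexok_eventually:
  fixes c :: "nat \<Rightarrow> real"
  assumes "lexok k c"
  shows "eventually (\<lambda>e. (\<Sum>j=1..k. c j * e^j) \<le> 0) (at_right 0)"
proof (cases "\<exists>j\<in>{1..k}. c j \<noteq> 0")
  case False
  then show ?thesis by simp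
next
  case True
  define l where "l = (LEAST j. j\<in>{1..k} \<and> c j \<noteq> 0)"
  have l: "l \<in> {1..k} \<and> c l \<noteq> 0" unfolding l_def using True by (metis (mono_tags, lifting) LeastI)
  have less: "c j = 0" if "1 \<le> j" "j < l" for j
    using not_less_Least[of j "\<lambda>j. j\<in>{1..k} \<and> c j \<noteq> 0"] that l unfolding l_def[symmetric] by auto
  have "c l < 0" using assms l less unfolding lexok_def by force
  from lowest_term_sign(1)[of l k c, OF _ _ less this] l
  show ?thesis by (auto elim: eventually_mono)
qed

lemma frequently_imp_lexok:
  fixes c :: "nat \<Rightarrow> real"
  assumes "frequently (\<lambda>e. (\<Sum>j=1..k. c j * e^j) \<le> 0) (at_right 0)"
  shows "lexok k c"
  unfolding lexok_def
proof (intro ballI impI, rule ccontr)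
  fix l assume l: "l \<in> {1..k}" and z: "\<forall>j\<in>{1..<l}. c j = 0" and "\<not> c l \<le> 0"
  then have "c l > 0" by simp
  from lowest_term_sign(2)[of l k c, OF _ _ _ this] l z
  have "eventually (\<lambda>e. (\<Sum>j=1..k. c j * e^j) > 0) (at_right 0)" by auto
  with assms show False
    unfolding frequently_def by (metis (mono_tags, lifting) eventually_mono not_le)
qed

lemma lexok_mono: "lexok k c \<Longrightarrow> m \<le> k \<Longrightarrow> lexok m c"
  unfolding lexok_def by auto




definition lexpt :: "'a::real_vector \<Rightarrow> nat \<Rightarrow> (nat \<Rightarrow> 'a) \<Rightarrow> real \<Rightarrow> 'a" where
  "lexpt x m u e = x + (\<Sum>j=1..m. (e^j) *\<^sub>R u j)"

lemma inner_lexpt: "a \<bullet> lexpt x m u e = a \<bullet> x + (\<Sum>j=1..m. (a \<bullet> u j) * e^j)"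
  unfolding lexpt_def by (simp add: inner_add_right inner_sum_right mult.commute)

lemma lexpt_sum_tendsto:
  "((\<lambda>e::real. \<Sum>j=1..m. (c j::real) * e^j) \<longlongrightarrow> 0) (at_right 0)"
proof -
  have "((\<lambda>e::real. \<Sum>j=1..m. (c j::real) * e^j) \<longlongrightarrow> (\<Sum>j=1..m. c j * 0^j)) (at_right 0)"
    by (intro tendsto_intros)
  moreover have "(\<Sum>j=1..m. c j * (0::real)^j) = 0" by (auto intro!: sum.neutral)
  ultimately show ?thesis by simp
qed

lemma inner_lexpt_tendsto: "((\<lambda>e. a \<bullet> lexpt x m u e) \<longlongrightarrow> a \<bullet> x) (at_right 0)"
  unfolding inner_lexpt using tendsto_add[OF tendsto_const lexpt_sum_tendsto] by simp

lemma prefix_halfspace: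
  assumes fr: "frequently (\<lambda>e. a \<bullet> lexpt x k u e \<le> b) (at_right 0)" and mk: "m \<le> k"
  shows "eventually (\<lambda>e. a \<bullet> lexpt x m u e \<le> b) (at_right 0)"
proof -
  have "a \<bullet> x \<le> b"
  proof (rule ccontr)
    assume "\<not> a \<bullet> x \<le> b"
    then have "b < a \<bullet> x" by simp
    then have "eventually (\<lambda>e. a \<bullet> lexpt x k u e > b) (at_right 0)"
      by (rule order_tendstoD(1)[OF inner_lexpt_tendsto])
    with fr show False
      unfolding frequently_def by (metis (mono_tags, lifting) eventually_mono not_le)
  qed
  then consider "a \<bullet> x < b" | "a \<bullet> x = b" by linarith
  then show ?thesis
  proof cases
    case 1
    have "eventually (\<lambda>e. a \<bullet> lexpt x m u e < b) (at_right 0)"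
      by (rule order_tendstoD(2)[OF inner_lexpt_tendsto 1])
    then show ?thesis by (auto elim: eventually_mono)
  next
    case 2
    have "frequently (\<lambda>e. (\<Sum>j=1..k. (a \<bullet> u j) * e^j) \<le> 0) (at_right 0)"
      using fr unfolding inner_lexpt 2 by (auto elim: frequently_elim1)
    then have "lexok k (\<lambda>j. a \<bullet> u j)" by (rule frequently_imp_lexok)
    then have "lexok m (\<lambda>j. a \<bullet> u j)" using mk by (rule lexok_mono)
    from lexok_eventually[OF this] show ?thesis
      unfolding inner_lexpt 2 by (auto elim: eventually_mono)
  qed
qed

lemma prefix_polyhedron:
  fixes S :: "'a::euclidean_space set"
  assumes "polyhedron S" and fr: "frequently (\<lambda>e. lexpt x k u e \<in> S) (at_right 0)"
  shows "eventually (\<lambda>e. \<forall>m\<le>k. lexpt x m u e \<in> S) (at_right 0)"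
proof -
  obtain F where F: "finite F" "S = \<Inter>F" "\<forall>h\<in>F. \<exists>a b. a \<noteq> 0 \<and> h = {x. a \<bullet> x \<le> b}"
    using assms(1) unfolding polyhedron_def by blast
  have "eventually (\<lambda>e. \<forall>h\<in>F. \<forall>m\<in>{..k}. lexpt x m u e \<in> h) (at_right 0)"
  proof (intro eventually_ball_finite ballI F(1) finite_atMost)
    fix h m assume h: "h \<in> F" and m: "m \<in> {..k}"
    obtain a b where h': "h = {x. a \<bullet> x \<le> b}" using F(3) h by blast
    have "frequently (\<lambda>e. a \<bullet> lexpt x k u e \<le> b) (at_right 0)"
      using fr h h' F(2) by (auto elim!: frequently_elim1)
    from prefix_halfspace[OF this] m show "eventually (\<lambda>e. lexpt x m u e \<in> h) (at_right 0)"
      by (auto simp: h')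
  qed
  then show ?thesis using F(2) by (auto elim!: eventually_mono)
qed

lemma polyhedron_lexpt:
  fixes S :: "'a::euclidean_space set"
  assumes "polyhedron S" "x \<in> S"
    and lex: "\<And>a b. S \<subseteq> {z. a \<bullet> z \<le> b} \<Longrightarrow> a \<bullet> x = b \<Longrightarrow> lexok k (\<lambda>j. a \<bullet> u j)"
  shows "eventually (\<lambda>e. lexpt x k u e \<in> S) (at_right 0)"
proof -
  obtain F where F: "finite F" "S = \<Inter>F" "\<forall>h\<in>F. \<exists>a b. a \<noteq> 0 \<and> h = {x. a \<bullet> x \<le> b}"
    using assms(1) unfolding polyhedron_def by blast
  have "eventually (\<lambda>e. \<forall>h\<in>F. lexpt x k u e \<in> h) (at_right 0)"
  proof (intro eventually_ball_finite ballI F(1))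
    fix h assume h: "h \<in> F"
    obtain a b where h': "h = {x. a \<bullet> x \<le> b}" using F(3) h by blast
    have "a \<bullet> x \<le> b" using assms(2) F(2) h h' by auto
    then consider "a \<bullet> x < b" | "a \<bullet> x = b" by linarith
    then show "eventually (\<lambda>e. lexpt x k u e \<in> h) (at_right 0)"
    proof cases
      case 1
      have "eventually (\<lambda>e. a \<bullet> lexpt x k u e < b) (at_right 0)"
        by (rule order_tendstoD(2)[OF inner_lexpt_tendsto 1])
      then show ?thesis unfolding h' by (auto elim: eventually_mono)
    next
      case 2
      have "S \<subseteq> {z. a \<bullet> z \<le> b}" using F(2) h h' by auto
      from lexok_eventually[OF lex[OF this 2]] show ?thesis
        unfolding h' by (auto simp: inner_lexpt 2 elim!: eventually_mono)
    qed
  qed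
  then show ?thesis using F(2) by (auto elim!: eventually_mono)
qed




lemma cut_hull_sub:
  fixes V :: "'a::real_inner set"
  assumes fin: "finite V" and zV: "z \<in> convex hull V" and za: "a \<bullet> z \<le> c"
  defines "Vm \<equiv> {v\<in>V. a \<bullet> v \<le> c}" and "Vp \<equiv> {v\<in>V. a \<bullet> v > c}"
  defines "cr \<equiv> \<lambda>v w. v + ((c - a \<bullet> v) / (a \<bullet> w - a \<bullet> v)) *\<^sub>R (w - v)"
  shows "z \<in> convex hull (Vm \<union> (\<lambda>(v,w). cr v w) ` (Vm \<times> Vp))"
proof -
  let ?G = "Vm \<union> (\<lambda>(v,w). cr v w) ` (Vm \<times> Vp)"
  obtain \<mu> where mu0: "\<forall>x\<in>V. 0 \<le> \<mu> x" and mu1: "sum \<mu> V = 1" and muz: "(\<Sum>x\<in>V. \<mu> x *\<^sub>R x) = z"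
    using zV fin by (auto simp: convex_hull_finite)
  have finm: "finite Vm" and finp: "finite Vp" using fin by (auto simp: Vm_def Vp_def)
  have Vun: "V = Vm \<union> Vp" and dis: "Vm \<inter> Vp = {}" by (auto simp: Vm_def Vp_def)
  have sumV: "sum f V = sum f Vm + sum f Vp" for f :: "'a \<Rightarrow> 'b::comm_monoid_add"
    using sum.union_disjoint[OF finm finp dis] Vun by simp
  define Dm where "Dm = (\<Sum>v\<in>Vm. \<mu> v * (c - a \<bullet> v))"
  define Dp where "Dp = (\<Sum>w\<in>Vp. \<mu> w * (a \<bullet> w - c))"
  define Mp where "Mp = sum \<mu> Vp"
  define Wp where "Wp = (\<Sum>w\<in>Vp. \<mu> w *\<^sub>R w)"
  have Dm0: "Dm \<ge> 0" unfolding Dm_def using mu0 by (auto simp: Vm_def intro!: sum_nonneg)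
  have Dp0: "Dp \<ge> 0" unfolding Dp_def using mu0 by (auto simp: Vp_def intro!: sum_nonneg)
  have az: "a \<bullet> z = (\<Sum>x\<in>V. \<mu> x * (a \<bullet> x))"
    using muz by (auto simp: inner_sum_right)
  have "c - a \<bullet> z = (\<Sum>x\<in>V. \<mu> x * (c - a \<bullet> x))"
    using az mu1 by (simp add: right_diff_distrib sum_subtractf sum_distrib_right[symmetric])
  also have "\<dots> = Dm - Dp"
    unfolding sumV Dm_def Dp_def by (simp add: algebra_simps) (simp add: sum.distrib[symmetric])
  finally have DmDp: "Dp \<le> Dm" using za by simp
  have Gsub: "?G \<subseteq> convex hull ?G" by (rule hull_subset)
  show ?thesis
  proof (cases "Dp = 0")
    case True
    have "\<forall>w\<in>Vp. \<mu> w * (a \<bullet> w - c) = 0"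
      using True unfolding Dp_def
      by (subst sum_nonneg_eq_0_iff[symmetric]) (use finp mu0 in \<open>auto simp: Vp_def\<close>)
    then have mp0: "\<forall>w\<in>Vp. \<mu> w = 0" by (auto simp: Vp_def)
    have "z = (\<Sum>x\<in>Vm. \<mu> x *\<^sub>R x)" using muz mp0 unfolding sumV by simp
    moreover have "sum \<mu> Vm = 1" using mu1 mp0 unfolding sumV by simp
    ultimately have "z \<in> convex hull Vm"
      using mu0 finm by (auto simp: convex_hull_finite Vm_def)
    then show ?thesis by (meson hull_mono subsetD sup_ge1)
  next
    case False
    then have Dp: "Dp > 0" using Dp0 by simp
    then have Dm: "Dm > 0" using DmDp by simp
    define I where "I = Vm \<times> Vp \<union> (\<lambda>v. (v,v)) ` Vm"
    define \<omega> where "\<omega> = (\<lambda>(v,w). if w \<in> Vp then \<mu> v * \<mu> w * (a \<bullet> w - a \<bullet> v) / Dm else \<mu> v * (1 - Dp / Dm))"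
    define \<pi> where "\<pi> = (\<lambda>(v,w). if w \<in> Vp then cr v w else v)"
    have finI: "finite I" unfolding I_def using finm finp by auto
    have disI: "Vm \<times> Vp \<inter> (\<lambda>v. (v,v)) ` Vm = {}" using dis by auto
    have sumI: "sum f I = (\<Sum>v\<in>Vm. \<Sum>w\<in>Vp. f (v,w)) + (\<Sum>v\<in>Vm. f (v,v))" for f :: "'a \<times> 'a \<Rightarrow> 'b::comm_monoid_add"
      unfolding I_def
      by (subst sum.union_disjoint) (use finm finp disI in \<open>auto simp: sum.cartesian_product sum.reindex inj_on_def\<close>)
    have inner1: "(\<Sum>w\<in>Vp. \<mu> w * (a \<bullet> w - a \<bullet> v)) = Dp + (c - a \<bullet> v) * Mp" for v
      unfolding Dp_def Mp_def sum_distrib_left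
      by (subst sum.distrib[symmetric]) (auto intro!: sum.cong simp: algebra_simps)
    have w1: "(\<Sum>w\<in>Vp. \<omega> (v,w)) + \<omega> (v,v) = \<mu> v + \<mu> v * (c - a \<bullet> v) * Mp / Dm" if "v \<in> Vm" for v
    proof -
      have "(\<Sum>w\<in>Vp. \<omega> (v,w)) = \<mu> v / Dm * (\<Sum>w\<in>Vp. \<mu> w * (a \<bullet> w - a \<bullet> v))"
        unfolding \<omega>_def sum_distrib_left by (auto intro!: sum.cong)
      moreover have "\<omega> (v,v) = \<mu> v * (1 - Dp / Dm)" using that dis unfolding \<omega>_def by auto
      ultimately show ?thesis unfolding inner1 using Dm by (simp add: field_simps)
    qed
    have om1: "sum \<omega> I = 1"
    proof -
      have "sum \<omega> I = (\<Sum>v\<in>Vm. \<mu> v + \<mu> v * (c - a \<bullet> v) * Mp / Dm)"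
        unfolding sumI sum.distrib[symmetric] using w1 by (auto intro!: sum.cong)
      also have "\<dots> = sum \<mu> Vm + Mp / Dm * Dm"
        unfolding sum.distrib Dm_def sum_distrib_left by (auto intro!: sum.cong)
      also have "\<dots> = 1" using Dm mu1 unfolding sumV Mp_def by simp
      finally show ?thesis .
    qed
    have crid: "(a \<bullet> w - a \<bullet> v) *\<^sub>R cr v w = (a \<bullet> w - c) *\<^sub>R v + (c - a \<bullet> v) *\<^sub>R w"
      if "a \<bullet> w - a \<bullet> v \<noteq> 0" for v w
    proof -
      have e: "(a \<bullet> w - a \<bullet> v) * ((c - a \<bullet> v) / (a \<bullet> w - a \<bullet> v)) = c - a \<bullet> v" using that by simp
      show ?thesis unfolding cr_def scaleR_add_right scaleR_scaleR e by (simp add: algebra_simps)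
    qed
    have v1: "(\<Sum>w\<in>Vp. \<omega> (v,w) *\<^sub>R \<pi> (v,w)) + \<omega> (v,v) *\<^sub>R \<pi> (v,v) = \<mu> v *\<^sub>R v + (\<mu> v * (c - a \<bullet> v) / Dm) *\<^sub>R Wp" if "v \<in> Vm" for v
    proof -
      have "(\<Sum>w\<in>Vp. \<omega> (v,w) *\<^sub>R \<pi> (v,w)) = (\<Sum>w\<in>Vp. (\<mu> v * \<mu> w / Dm) *\<^sub>R ((a \<bullet> w - c) *\<^sub>R v + (c - a \<bullet> v) *\<^sub>R w))"
      proof (rule sum.cong)
        fix w assume w: "w \<in> Vp"
        then have ne: "a \<bullet> w - a \<bullet> v \<noteq> 0" using that by (auto simp: Vm_def Vp_def)
        have "\<omega> (v,w) *\<^sub>R \<pi> (v,w) = (\<mu> v * \<mu> w / Dm) *\<^sub>R ((a \<bullet> w - a \<bullet> v) *\<^sub>R cr v w)"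
        proof -
          have "\<omega> (v,w) = \<mu> v * \<mu> w / Dm * (a \<bullet> w - a \<bullet> v)" using w by (simp add: \<omega>_def)
          moreover have "\<pi> (v,w) = cr v w" using w by (simp add: \<pi>_def)
          ultimately show ?thesis by simp
        qed
        then show "\<omega> (v,w) *\<^sub>R \<pi> (v,w) = (\<mu> v * \<mu> w / Dm) *\<^sub>R ((a \<bullet> w - c) *\<^sub>R v + (c - a \<bullet> v) *\<^sub>R w)"
          using crid[OF ne] by simp
      qed simp
      also have "\<dots> = (\<Sum>w\<in>Vp. (\<mu> v / Dm * (\<mu> w * (a \<bullet> w - c))) *\<^sub>R v) + (\<Sum>w\<in>Vp. (\<mu> v * (c - a \<bullet> v) / Dm) *\<^sub>R (\<mu> w *\<^sub>R w))"
        by (simp add: sum.distrib[symmetric] scaleR_add_right scaleR_scaleR mult_ac)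
      also have "\<dots> = (\<mu> v / Dm * Dp) *\<^sub>R v + (\<mu> v * (c - a \<bullet> v) / Dm) *\<^sub>R Wp"
        by (simp add: Dp_def Wp_def sum_distrib_left scaleR_sum_left scaleR_sum_right)
      finally have A: "(\<Sum>w\<in>Vp. \<omega> (v,w) *\<^sub>R \<pi> (v,w)) = (\<mu> v / Dm * Dp) *\<^sub>R v + (\<mu> v * (c - a \<bullet> v) / Dm) *\<^sub>R Wp" .
      have B: "\<omega> (v,v) *\<^sub>R \<pi> (v,v) = (\<mu> v * (1 - Dp / Dm)) *\<^sub>R v" using that dis unfolding \<omega>_def \<pi>_def by auto
      show ?thesis unfolding A B using Dm by (simp add: algebra_simps scaleR_add_left[symmetric])
    qed
    have omz: "(\<Sum>i\<in>I. \<omega> i *\<^sub>R \<pi> i) = z"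
    proof -
      have "(\<Sum>i\<in>I. \<omega> i *\<^sub>R \<pi> i) = (\<Sum>v\<in>Vm. \<mu> v *\<^sub>R v + (\<mu> v * (c - a \<bullet> v) / Dm) *\<^sub>R Wp)"
        unfolding sumI sum.distrib[symmetric] using v1 by (auto intro!: sum.cong)
      also have "\<dots> = (\<Sum>v\<in>Vm. \<mu> v *\<^sub>R v) + (Dm / Dm) *\<^sub>R Wp"
        unfolding sum.distrib Dm_def scaleR_sum_left[symmetric] sum_divide_distrib[symmetric] by simp
      also have "\<dots> = z" using Dm muz unfolding sumV Wp_def by simp
      finally show ?thesis .
    qed
    have om0: "\<forall>i\<in>I. 0 \<le> \<omega> i"
      using mu0 Dm DmDp by (auto simp: I_def \<omega>_def Vm_def Vp_def intro!: mult_nonneg_nonneg divide_nonneg_pos)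
    have piG: "\<forall>i\<in>I. \<pi> i \<in> ?G" unfolding I_def \<pi>_def using dis by auto
    have "(\<Sum>i\<in>I. \<omega> i *\<^sub>R \<pi> i) \<in> convex hull ?G"
      by (rule convex_sum[OF finI convex_convex_hull om1]) (use om0 in blast, use piG Gsub in blast)
    then show ?thesis using omz by simp
  qed
qed




lemma cut_rat:
  fixes R :: "'a::real_inner \<Rightarrow> bool"
  assumes Radd: "\<And>v w. R v \<Longrightarrow> R w \<Longrightarrow> R (v + w)"
    and Rsc: "\<And>q v. q \<in> \<rat> \<Longrightarrow> R v \<Longrightarrow> R (q *\<^sub>R v)"
    and Rin: "\<And>v. R v \<Longrightarrow> a \<bullet> v \<in> \<rat>"
    and cQ: "c \<in> \<rat>" and fin: "finite V" and RV: "\<forall>v\<in>V. R v"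
  shows "\<exists>V'. finite V' \<and> (\<forall>v\<in>V'. R v) \<and> convex hull V \<inter> {z. a \<bullet> z \<le> c} = convex hull V'"
proof -
  define Vm where "Vm \<equiv> {v\<in>V. a \<bullet> v \<le> c}"
  define Vp where "Vp \<equiv> {v\<in>V. a \<bullet> v > c}"
  define cr where "cr \<equiv> \<lambda>v w. v + ((c - a \<bullet> v) / (a \<bullet> w - a \<bullet> v)) *\<^sub>R (w - v)"
  let ?G = "Vm \<union> (\<lambda>(v,w). cr v w) ` (Vm \<times> Vp)"
  have finm: "finite Vm" and finp: "finite Vp" using fin by (auto simp: Vm_def Vp_def)
  have crprops: "cr v w \<in> convex hull V \<and> a \<bullet> cr v w = c \<and> R (cr v w)" if "v \<in> Vm" "w \<in> Vp" for v w
  proof -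
    have v: "v \<in> V" "a \<bullet> v \<le> c" and w: "w \<in> V" "a \<bullet> w > c" using that by (auto simp: Vm_def Vp_def)
    define t where "t = (c - a \<bullet> v) / (a \<bullet> w - a \<bullet> v)"
    have t0: "0 \<le> t" and t1: "t \<le> 1" using v w by (auto simp: t_def divide_simps)
    have "cr v w = (1 - t) *\<^sub>R v + t *\<^sub>R w" by (simp add: cr_def t_def[symmetric] algebra_simps)
    also have "\<dots> \<in> convex hull V"
      using convexD[OF convex_convex_hull, of v V w "1 - t" t] hull_subset[of V convex] v w t0 t1 by auto
    finally have 1: "cr v w \<in> convex hull V" .
    have "a \<bullet> cr v w = a \<bullet> v + t * (a \<bullet> w - a \<bullet> v)" by (simp add: cr_def t_def[symmetric] inner_diff_right inner_add_right)
    also have "\<dots> = c" using v w by (simp add: t_def)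
    finally have 2: "a \<bullet> cr v w = c" .
    have tQ: "t \<in> \<rat>" unfolding t_def using Rin RV v w cQ by auto
    have "cr v w = v + t *\<^sub>R (w + (-1) *\<^sub>R v)" by (simp add: cr_def t_def[symmetric])
    moreover have "R (v + t *\<^sub>R (w + (-1) *\<^sub>R v))"
      using RV v w tQ by (intro Radd Rsc) auto
    ultimately have 3: "R (cr v w)" by simp
    show ?thesis using 1 2 3 by blast
  qed
  show ?thesis
  proof (intro exI conjI)
    show "finite ?G" using finm finp by auto
    show "\<forall>v\<in>?G. R v" using RV crprops by (auto simp: Vm_def)
    show "convex hull V \<inter> {z. a \<bullet> z \<le> c} = convex hull ?G"
    proof
      show "convex hull V \<inter> {z. a \<bullet> z \<le> c} \<subseteq> convex hull ?G"
        using cut_hull_sub[OF fin, of _ a c] unfolding Vm_def Vp_def cr_def by blast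
      show "convex hull ?G \<subseteq> convex hull V \<inter> {z. a \<bullet> z \<le> c}"
      proof (rule hull_minimal)
        show "?G \<subseteq> convex hull V \<inter> {z. a \<bullet> z \<le> c}"
          using crprops hull_subset[of V convex] by (auto simp: Vm_def)
        show "convex (convex hull V \<inter> {z. a \<bullet> z \<le> c})"
          by (intro convex_Int convex_convex_hull convex_halfspace_le)
      qed
    qed
  qed
qed

lemma cuts_rat:
  fixes R :: "'a::real_inner \<Rightarrow> bool"
  assumes Radd: "\<And>v w. R v \<Longrightarrow> R w \<Longrightarrow> R (v + w)"
    and Rsc: "\<And>q v. q \<in> \<rat> \<Longrightarrow> R v \<Longrightarrow> R (q *\<^sub>R v)"
    and finH: "finite H" and H: "\<forall>(a,c)\<in>H. c \<in> \<rat> \<and> (\<forall>v. R v \<longrightarrow> a \<bullet> v \<in> \<rat>)"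
  shows "finite V \<Longrightarrow> \<forall>v\<in>V. R v \<Longrightarrow> \<exists>V'. finite V' \<and> (\<forall>v\<in>V'. R v) \<and>
            convex hull V \<inter> {z. \<forall>(a,c)\<in>H. a \<bullet> z \<le> c} = convex hull V'"
  using finH H
proof (induction H arbitrary: V rule: finite_induct)
  case empty
  then show ?case by auto
next
  case (insert h H)
  obtain a c where h: "h = (a,c)" by force
  obtain V1 where V1: "finite V1" "\<forall>v\<in>V1. R v" "convex hull V \<inter> {z. a \<bullet> z \<le> c} = convex hull V1"
    using cut_rat[OF Radd Rsc, of a c V] insert.prems insert.hyps h by auto
  obtain V2 where V2: "finite V2" "\<forall>v\<in>V2. R v"
      "convex hull V1 \<inter> {z. \<forall>(a,c)\<in>H. a \<bullet> z \<le> c} = convex hull V2"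
    using insert.IH[OF V1(1,2)] insert.prems by auto
  have "convex hull V \<inter> {z. \<forall>(a,c)\<in>insert h H. a \<bullet> z \<le> c}
        = (convex hull V \<inter> {z. a \<bullet> z \<le> c}) \<inter> {z. \<forall>(a,c)\<in>H. a \<bullet> z \<le> c}"
    using h by auto
  then show ?case using V1 V2 by auto
qed




lemma rational_point_inner:
  fixes a v :: "real^'n"
  shows "rational_point a \<Longrightarrow> rational_point v \<Longrightarrow> a \<bullet> v \<in> \<rat>"
  unfolding rational_point_def inner_vec_def by (intro Rats_sum) simp

lemma Q_rational_hull:
  fixes A :: "real^'n^2" and b :: "real^2"
  assumes fT: "finite VT" and rT: "\<forall>v\<in>VT. rational_point v"
    and fW: "finite W" and rW: "\<forall>w\<in>W. rational_point w"
    and Ai: "\<forall>i j. A$i$j \<in> \<int>" and bi: "\<forall>i. b$i \<in> \<int>"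
  shows "\<exists>V. finite V \<and> (\<forall>v\<in>V. rational_point v) \<and>
           {z \<in> convex hull VT. A *v z + b \<in> convex hull W} = convex hull V"
proof -
  define R :: "(real^'n) \<times> (real^2) \<Rightarrow> bool" where "R p \<longleftrightarrow> rational_point (fst p) \<and> rational_point (snd p)" for p
  define H where "H = (\<lambda>i. ((A$i, - axis i 1), - b$i)) ` UNIV \<union> (\<lambda>i. ((- A$i, axis i (1::real)), b$i)) ` UNIV"
  have Radd: "R v \<Longrightarrow> R w \<Longrightarrow> R (v + w)" for v w by (auto simp: R_def rational_point_def)
  have Rsc: "q \<in> \<rat> \<Longrightarrow> R v \<Longrightarrow> R (q *\<^sub>R v)" for q v by (auto simp: R_def rational_point_def)
  have rA: "rational_point (A$i)" for i using Ai Ints_subset_Rats by (auto simp: rational_point_def)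
  have rax: "rational_point (axis i (1::real) :: real^2)" for i by (auto simp: rational_point_def axis_def)
  have rneg: "rational_point (- v)" if "rational_point v" for v :: "real^'m" using that by (auto simp: rational_point_def)
  have rAn: "rational_point (- A$i)" for i using rA by (auto simp: rational_point_def)
  have raxn: "rational_point (- axis i (1::real) :: real^2)" for i by (auto simp: rational_point_def axis_def)
  have bQ: "b$i \<in> \<rat>" for i using bi Ints_subset_Rats by auto
  have H: "\<forall>(a,c)\<in>H. c \<in> \<rat> \<and> (\<forall>v. R v \<longrightarrow> a \<bullet> v \<in> \<rat>)"
    unfolding H_def R_def using rA rax rAn raxn bQ
    by (auto simp: inner_prod_def intro!: Rats_add rational_point_inner)
  have finH: "finite H" unfolding H_def by simp
  have fV0: "finite (VT \<times> W)" using fT fW by simp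
  have rV0: "\<forall>v\<in>VT \<times> W. R v" using rT rW by (auto simp: R_def)
  obtain V' where V': "finite V'" "\<forall>v\<in>V'. R v"
    "convex hull (VT \<times> W) \<inter> {z. \<forall>(a,c)\<in>H. a \<bullet> z \<le> c} = convex hull V'"
    using cuts_rat[OF Radd Rsc finH H fV0 rV0] by blast
  have cons: "(\<forall>(a,c)\<in>H. a \<bullet> (z,w) \<le> c) \<longleftrightarrow> A *v z + b = w" for z w
  proof -
    have "(\<forall>(a,c)\<in>H. a \<bullet> (z,w) \<le> c) \<longleftrightarrow> (\<forall>i. (A *v z)$i - w$i \<le> - b$i \<and> - (A *v z)$i + w$i \<le> b$i)"
      unfolding H_def by (simp add: ball_Un matrix_vector_mul_component inner_axis' all_conj_distrib)
    also have "\<dots> \<longleftrightarrow> (\<forall>i. (A *v z + b)$i = w$i)"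
    proof -
      have "((A *v z)$i - w$i \<le> - b$i \<and> - (A *v z)$i + w$i \<le> b$i) \<longleftrightarrow> (A *v z + b)$i = w$i" for i
        by (simp; arith)
      then show ?thesis by simp
    qed
    also have "\<dots> \<longleftrightarrow> A *v z + b = w" by (simp add: vec_eq_iff)
    finally show ?thesis .
  qed
  have "{z \<in> convex hull VT. A *v z + b \<in> convex hull W} =
        fst ` (convex hull (VT \<times> W) \<inter> {z. \<forall>(a,c)\<in>H. a \<bullet> z \<le> c})"
  proof
    show "{z \<in> convex hull VT. A *v z + b \<in> convex hull W} \<subseteq> fst ` (convex hull (VT \<times> W) \<inter> {z. \<forall>(a,c)\<in>H. a \<bullet> z \<le> c})"
    proof
      fix z assume "z \<in> {z \<in> convex hull VT. A *v z + b \<in> convex hull W}"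
      then show "z \<in> fst ` (convex hull (VT \<times> W) \<inter> {z. \<forall>(a,c)\<in>H. a \<bullet> z \<le> c})"
        by (intro image_eqI[of z fst "(z, A *v z + b)"]) (auto simp: convex_hull_Times cons)
    qed
    show "fst ` (convex hull (VT \<times> W) \<inter> {z. \<forall>(a,c)\<in>H. a \<bullet> z \<le> c}) \<subseteq> {z \<in> convex hull VT. A *v z + b \<in> convex hull W}"
      using cons by (auto simp: convex_hull_Times)
  qed
  also have "\<dots> = convex hull (fst ` V')"
    unfolding V'(3) by (rule convex_hull_linear_image[OF linear_fst])
  finally show ?thesis using V'(1,2) by (auto simp: R_def)
qed

lemma caratheodory_indep:
  fixes V :: "'a::euclidean_space set"
  assumes "finite V" "z \<in> convex hull V"
  shows "\<exists>W\<subseteq>V. \<not> affine_dependent W \<and> z \<in> convex hull W"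
proof -
  define P where "P n \<longleftrightarrow> (\<exists>W\<subseteq>V. card W = n \<and> z \<in> convex hull W)" for n
  have "P (card V)" using assms unfolding P_def by blast
  then have ex: "\<exists>n. P n" by blast
  define n where "n = (LEAST n. P n)"
  have Pn: "P n" unfolding n_def using ex by (rule LeastI_ex)
  then obtain W where W: "W \<subseteq> V" "card W = n" "z \<in> convex hull W" unfolding P_def by blast
  have fW: "finite W" using W(1) assms(1) finite_subset by blast
  have "\<not> affine_dependent W"
  proof
    assume dep: "affine_dependent W"
    obtain S where S: "finite S" "S \<subseteq> W" "card S \<le> aff_dim W + 1" "z \<in> convex hull S"
      using W(3) caratheodory_aff_dim[of W] by blast
    have "aff_dim W < int (card W) - 1"
      using dep fW affine_independent_iff_card[of W] aff_dim_le_card[OF fW] by linarith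
    then have "card S < n" using S(3) W(2) by linarith
    moreover have "P (card S)" unfolding P_def using S W(1) by blast
    ultimately show False using not_less_Least[of "card S" P] unfolding n_def by blast
  qed
  then show ?thesis using W by blast
qed




definition nres :: "(nat \<Rightarrow> real^'n) \<Rightarrow> nat \<Rightarrow> real^'n \<Rightarrow> real^'n" where
  "nres u l v = (v - proj_first u l v) /\<^sub>R norm (v - proj_first u l v)"

lemma mv_tendsto:
  fixes A :: "real^'n^'m"
  shows "(X \<longlongrightarrow> l) F \<Longrightarrow> ((\<lambda>i. A *v X i) \<longlongrightarrow> A *v l) F"
  using isCont_tendsto_compose[OF linear_continuous_at[OF matrix_vector_mul_bounded_linear]] by blast

lemma proj_first_inner:
  assumes "orthonormal_tuple s u" "j \<in> {1..s}"
  shows "proj_first u s v \<bullet> u j = v \<bullet> u j"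
proof -
  have "proj_first u s v \<bullet> u j = (\<Sum>i=1..s. (v \<bullet> u i) * (u i \<bullet> u j))"
    unfolding proj_first_def by (simp add: inner_sum_left)
  also have "\<dots> = (\<Sum>i\<in>{j}. (v \<bullet> u i) * (u i \<bullet> u j))"
    using assms by (intro sum.mono_neutral_right) (auto simp: orthonormal_tuple_def)
  also have "\<dots> = v \<bullet> u j" using assms by (simp add: orthonormal_tuple_def inner_commute norm_eq_1[symmetric] dot_square_norm)
  finally show ?thesis .
qed

lemma res_orth:
  assumes "orthonormal_tuple s u" "j \<in> {1..s}"
  shows "(v - proj_first u s v) \<bullet> u j = 0"
  using proj_first_inner[OF assms] by (simp add: inner_diff_left)

lemma mv_proj_first:
  fixes A :: "real^'n^'m"
  assumes "\<forall>j\<in>{1..s}. A *v u j = 0"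
  shows "A *v proj_first u s v = 0"
  unfolding proj_first_def using assms
  by (simp add: linear_sum[OF matrix_vector_mul_linear] linear_scale[OF matrix_vector_mul_linear])

lemma proj_first_cong:
  assumes "\<forall>j\<in>{1..l}. u' j = u j"
  shows "proj_first u' l v = proj_first u l v"
  unfolding proj_first_def using assms by (auto intro!: sum.cong)

lemma orthonormal_span_UNIV:
  fixes u :: "nat \<Rightarrow> real^'n"
  assumes "orthonormal_tuple CARD('n) u"
  shows "span (u ` {1..CARD('n)}) = UNIV"
proof -
  let ?B = "u ` {1..CARD('n)}"
  have inj: "inj_on u {1..CARD('n)}"
  proof
    fix i j assume i: "i \<in> {1..CARD('n)}" and j: "j \<in> {1..CARD('n)}" and e: "u i = u j"
    show "i = j"
    proof (rule ccontr)
      assume "i \<noteq> j"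
      then have "u i \<bullet> u j = 0" using assms i j by (auto simp: orthonormal_tuple_def)
      moreover have "u i \<bullet> u i = 1" using assms i by (simp add: orthonormal_tuple_def dot_square_norm)
      ultimately show False using e by simp
    qed
  qed
  have "pairwise orthogonal ?B"
    using assms by (auto simp: pairwise_def orthogonal_def orthonormal_tuple_def)
  moreover have "0 \<notin> ?B" using assms by (auto simp: orthonormal_tuple_def)
  ultimately have ind: "independent ?B" by (rule pairwise_orthogonal_independent)
  have "card ?B = CARD('n)" using card_image[OF inj] by simp
  then have "dim (UNIV :: (real^'n) set) \<le> card ?B" by simp
  then have "UNIV \<subseteq> span ?B" by (rule card_ge_dim_independent[OF subset_UNIV ind])
  then show ?thesis by auto
qed




definition found :: "(nat \<Rightarrow> real^'n) \<Rightarrow> real^'n^'m \<Rightarrow> real^'m \<Rightarrow> nat \<Rightarrow> (nat \<Rightarrow> nat) \<Rightarrow> (nat \<Rightarrow> real^'n) \<Rightarrow> bool" where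
  "found d A w k \<sigma> u \<longleftrightarrow> 1 \<le> k \<and> strict_mono \<sigma> \<and> orthonormal_tuple k u \<and> (\<forall>j\<in>{1..<k}. A *v u j = 0) \<and>
     A *v u k \<noteq> 0 \<and> A *v u k = norm (A *v u k) *\<^sub>R w \<and> (\<forall>i. d (\<sigma> i) \<notin> span (u ` {1..k})) \<and>
     (\<forall>s\<in>{1..k}. (\<lambda>i. nres u (s-1) (d (\<sigma> i))) \<longlonglongrightarrow> u s)"

definition partial :: "(nat \<Rightarrow> real^'n) \<Rightarrow> real^'n^'m \<Rightarrow> nat \<Rightarrow> (nat \<Rightarrow> nat) \<Rightarrow> (nat \<Rightarrow> real^'n) \<Rightarrow> bool" where
  "partial d A s \<sigma> u \<longleftrightarrow> strict_mono \<sigma> \<and> orthonormal_tuple s u \<and> (\<forall>j\<in>{1..s}. A *v u j = 0) \<and>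
     (\<forall>l\<in>{1..s}. (\<lambda>i. nres u (l-1) (d (\<sigma> i))) \<longlonglongrightarrow> u l)"

lemma extract_step:
  fixes d :: "nat \<Rightarrow> real^'n" and A :: "real^'n^'m" and w :: "real^'m"
  assumes hA: "\<forall>i. A *v d i \<notin> span {w}"
    and hlim: "(\<lambda>i. (A *v d i) /\<^sub>R norm (A *v d i)) \<longlonglongrightarrow> w"
    and P: "partial d A s \<sigma> u"
  shows "(\<exists>\<sigma>' u'. found d A w (Suc s) \<sigma>' u') \<or> (\<exists>\<sigma>' u'. partial d A (Suc s) \<sigma>' u')"
proof -
  have sm: "strict_mono \<sigma>" and on: "orthonormal_tuple s u" and ker: "\<forall>j\<in>{1..s}. A *v u j = 0"
    and conv: "\<forall>l\<in>{1..s}. (\<lambda>i. nres u (l-1) (d (\<sigma> i))) \<longlonglongrightarrow> u l"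
    using P by (auto simp: partial_def)
  define r where "r i = d (\<sigma> i) - proj_first u s (d (\<sigma> i))" for i
  have Ar: "A *v r i = A *v d (\<sigma> i)" for i
    unfolding r_def using mv_proj_first[OF ker] by (simp add: matrix_vector_mult_diff_distrib)
  have Ad0: "A *v d i \<noteq> 0" for i using hA span_zero by metis
  have r0: "r i \<noteq> 0" for i using Ad0[of "\<sigma> i"] Ar[of i] by auto
  have nr: "nres u s (d (\<sigma> i)) = r i /\<^sub>R norm (r i)" for i by (simp add: nres_def r_def)
  have insph: "\<forall>i. nres u s (d (\<sigma> i)) \<in> sphere 0 1" using r0 by (simp add: nr)
  obtain v \<tau> where v: "v \<in> sphere 0 1" and st: "strict_mono \<tau>"
    and lim: "((\<lambda>i. nres u s (d (\<sigma> i))) \<circ> \<tau>) \<longlonglongrightarrow> v"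
    using seq_compactE[OF compact_imp_seq_compact[OF compact_sphere] insph] by blast
  have nv: "norm v = 1" using v by simp
  have orth: "v \<bullet> u j = 0" if j: "j \<in> {1..s}" for j
  proof -
    have "((\<lambda>i. nres u s (d (\<sigma> (\<tau> i))) \<bullet> u j) \<longlonglongrightarrow> v \<bullet> u j)"
      using tendsto_inner[OF lim tendsto_const] by (simp add: o_def)
    moreover have "nres u s (d (\<sigma> (\<tau> i))) \<bullet> u j = 0" for i
      unfolding nr using res_orth[OF on j] by (simp add: r_def)
    ultimately show ?thesis by (simp add: LIMSEQ_const_iff)
  qed
  define u' where "u' = u(Suc s := v)"
  have agree: "\<forall>j\<in>{1..l}. u' j = u j" if "l \<le> s" for l using that by (auto simp: u'_def)
  have on': "orthonormal_tuple (Suc s) u'"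
    using on nv orth unfolding orthonormal_tuple_def u'_def
    by (auto simp: le_Suc_eq inner_commute)
  have sm': "strict_mono (\<sigma> \<circ> \<tau>)" using sm st by (rule strict_mono_o)
  have conv': "\<forall>l\<in>{1..Suc s}. (\<lambda>i. nres u' (l-1) (d ((\<sigma> \<circ> \<tau>) i))) \<longlonglongrightarrow> u' l"
  proof
    fix l assume l: "l \<in> {1..Suc s}"
    have eqn: "nres u' (l-1) z = nres u (l-1) z" for z
      unfolding nres_def using proj_first_cong[OF agree[of "l-1"]] l by auto
    show "(\<lambda>i. nres u' (l-1) (d ((\<sigma> \<circ> \<tau>) i))) \<longlonglongrightarrow> u' l"
    proof (cases "l = Suc s")
      case True
      then show ?thesis unfolding eqn using lim by (simp add: u'_def o_def)
    next
      case False
      then have "l \<in> {1..s}" using l by auto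
      then have "(\<lambda>i. nres u (l-1) (d (\<sigma> i))) \<longlonglongrightarrow> u l" using conv by blast
      from LIMSEQ_subseq_LIMSEQ[OF this st] show ?thesis
        unfolding eqn using False \<open>l \<in> {1..s}\<close> by (simp add: u'_def o_def)
    qed
  qed
  show ?thesis
  proof (cases "A *v v = 0")
    case True
    have "partial d A (Suc s) (\<sigma> \<circ> \<tau>) u'"
      unfolding partial_def using sm' on' conv' ker True by (auto simp: u'_def le_Suc_eq)
    then show ?thesis by blast
  next
    case False
    define g where "g i = (A *v d i) /\<^sub>R norm (A *v d i)" for i
    define q where "q i = norm (A *v d (\<sigma> (\<tau> i))) / norm (r (\<tau> i))" for i
    have L1: "(\<lambda>i. A *v nres u s (d (\<sigma> (\<tau> i)))) \<longlonglongrightarrow> A *v v"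
      using mv_tendsto[OF lim] by (simp add: o_def)
    have eq1: "A *v nres u s (d (\<sigma> (\<tau> i))) = q i *\<^sub>R g (\<sigma> (\<tau> i))" for i
      unfolding nr q_def g_def using Ad0 by (simp add: linear_scale[OF matrix_vector_mul_linear] Ar inverse_eq_divide)
    have "(\<lambda>i. norm (A *v nres u s (d (\<sigma> (\<tau> i))))) \<longlonglongrightarrow> norm (A *v v)"
      using tendsto_norm[OF L1] .
    moreover have "norm (A *v nres u s (d (\<sigma> (\<tau> i)))) = q i" for i
      unfolding eq1 g_def q_def using Ad0 r0 by simp
    ultimately have qlim: "q \<longlonglongrightarrow> norm (A *v v)" by simp
    have glim: "(\<lambda>i. g (\<sigma> (\<tau> i))) \<longlonglongrightarrow> w"
      using LIMSEQ_subseq_LIMSEQ[OF hlim sm'] by (simp add: g_def o_def)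
    have "(\<lambda>i. A *v nres u s (d (\<sigma> (\<tau> i)))) \<longlonglongrightarrow> norm (A *v v) *\<^sub>R w"
      unfolding eq1 by (rule tendsto_scaleR[OF qlim glim])
    with L1 have Av: "A *v v = norm (A *v v) *\<^sub>R w" by (rule LIMSEQ_unique)
    have nspan: "d ((\<sigma> \<circ> \<tau>) i) \<notin> span (u' ` {1..Suc s})" for i
    proof
      assume "d ((\<sigma> \<circ> \<tau>) i) \<in> span (u' ` {1..Suc s})"
      then have "A *v d ((\<sigma> \<circ> \<tau>) i) \<in> (\<lambda>x. A *v x) ` span (u' ` {1..Suc s})" by blast
      also have "\<dots> = span ((\<lambda>x. A *v x) ` u' ` {1..Suc s})"
        by (rule span_linear_image[OF matrix_vector_mul_linear, symmetric])
      also have "(\<lambda>x. A *v x) ` u' ` {1..Suc s} \<subseteq> {0, A *v v}"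
        using ker by (auto simp: u'_def le_Suc_eq)
      then have "span ((\<lambda>x. A *v x) ` u' ` {1..Suc s}) \<subseteq> span {0, A *v v}" by (rule span_mono)
      also have "\<dots> \<subseteq> span {w}"
      proof -
        have "A *v v \<in> span {w}" by (subst Av) (intro span_mul span_base, simp)
        then have "{A *v v} \<subseteq> span {w}" by simp
        then have "span {A *v v} \<subseteq> span {w}" by (intro span_minimal subspace_span)
        then show ?thesis by simp
      qed
      finally show False using hA by blast
    qed
    have "found d A w (Suc s) (\<sigma> \<circ> \<tau>) u'"
      unfolding found_def using sm' on' conv' ker False Av nspan
      by (auto simp: u'_def)
    then show ?thesis by blast
  qed
qed


lemma extract_dirs:
  fixes d :: "nat \<Rightarrow> real^'n" and A :: "real^'n^'m" and w :: "real^'m"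
  assumes hA: "\<forall>i. A *v d i \<notin> span {w}"
    and hlim: "(\<lambda>i. (A *v d i) /\<^sub>R norm (A *v d i)) \<longlonglongrightarrow> w"
  shows "\<exists>k \<sigma> u. found d A w k \<sigma> u \<and> k < CARD('n)"
proof -
  have Ad0: "A *v d i \<noteq> 0" for i using hA span_zero by metis
  have main: "(\<exists>k \<sigma> u. found d A w k \<sigma> u \<and> k \<le> s) \<or> (\<exists>\<sigma> u. partial d A s \<sigma> u)" for s
  proof (induction s)
    case 0
    have "partial d A 0 id u" for u by (simp add: partial_def orthonormal_tuple_def strict_mono_def)
    then show ?case by blast
  next
    case (Suc s)
    then show ?case
    proof
      assume "\<exists>k \<sigma> u. found d A w k \<sigma> u \<and> k \<le> s"
      then show ?case using le_SucI by blast
    next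
      assume "\<exists>\<sigma> u. partial d A s \<sigma> u"
      then obtain \<sigma> u where "partial d A s \<sigma> u" by blast
      from extract_step[OF hA hlim this] show ?case by blast
    qed
  qed
  have "\<not> partial d A CARD('n) \<sigma> u" for \<sigma> u
  proof
    assume P: "partial d A CARD('n) \<sigma> u"
    then have sp: "span (u ` {1..CARD('n)}) = UNIV"
      by (intro orthonormal_span_UNIV) (simp add: partial_def)
    have "A *v d 0 \<in> (\<lambda>x. A *v x) ` span (u ` {1..CARD('n)})" using sp by blast
    also have "\<dots> = span ((\<lambda>x. A *v x) ` u ` {1..CARD('n)})"
      by (rule span_linear_image[OF matrix_vector_mul_linear, symmetric])
    also have "(\<lambda>x. A *v x) ` u ` {1..CARD('n)} \<subseteq> {0}"
      using P by (auto simp: partial_def)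
    then have "span ((\<lambda>x. A *v x) ` u ` {1..CARD('n)}) \<subseteq> span {0}" by (rule span_mono)
    finally show False using Ad0 by simp
  qed
  then obtain k \<sigma> u where F: "found d A w k \<sigma> u" and kn: "k \<le> CARD('n)"
    using main[of "CARD('n)"] by blast
  have "k \<noteq> CARD('n)"
  proof
    assume "k = CARD('n)"
    then have "span (u ` {1..k}) = UNIV"
      using F orthonormal_span_UNIV[of u] by (simp add: found_def)
    then show False using F by (auto simp: found_def)
  qed
  then have "k < CARD('n)" using kn by simp
  then show ?thesis using F by blast
qed

lemma lex_from_seq:
  fixes d :: "nat \<Rightarrow> real^'n"
  assumes on: "orthonormal_tuple k u"
    and conv: "\<forall>s\<in>{1..k}. (\<lambda>i. nres u (s-1) (d (\<sigma> i))) \<longlonglongrightarrow> u s"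
    and neg: "\<forall>i. a \<bullet> d (\<sigma> i) \<le> 0"
  shows "lexok k (\<lambda>j. a \<bullet> u j)"
  unfolding lexok_def
proof (intro ballI impI)
  fix l assume l: "l \<in> {1..k}" and z: "\<forall>j\<in>{1..<l}. a \<bullet> u j = 0"
  have "a \<bullet> proj_first u (l-1) v = 0" for v
    unfolding proj_first_def using z by (auto simp: inner_sum_right intro!: sum.neutral)
  then have "a \<bullet> nres u (l-1) (d (\<sigma> i)) \<le> 0" for i
    unfolding nres_def using neg
    by (simp add: inner_diff_right mult_nonneg_nonpos)
  moreover have "(\<lambda>i. a \<bullet> nres u (l-1) (d (\<sigma> i))) \<longlonglongrightarrow> a \<bullet> u l"
    using tendsto_inner[OF tendsto_const conv[rule_format, OF l]] .
  ultimately show "a \<bullet> u l \<le> 0"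
    by (intro LIMSEQ_le_const2[where X="\<lambda>i. a \<bullet> nres u (l-1) (d (\<sigma> i))"]) auto
qed




lemma set_le1: "{f m | m. m \<le> (1::nat)} = {f 0, f 1}"
  by (auto simp: le_Suc_eq)

lemma rational_simplex_polyhedron: "rational_simplex S \<Longrightarrow> polyhedron S"
  unfolding rational_simplex_def
  by (metis polytope_def polytope_imp_polyhedron)

lemma finite_pigeon_nat:
  assumes "finite K" "\<forall>i::nat. \<exists>T\<in>K. P i T"
  shows "\<exists>T\<in>K. infinite {i. P i T}"
proof (rule ccontr)
  assume "\<not> ?thesis"
  then have "finite (\<Union>T\<in>K. {i. P i T})" using assms(1) by auto
  moreover have "(\<Union>T\<in>K. {i. P i T}) = UNIV" using assms(2) by auto
  ultimately show False by simp
qed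

lemma frequently_pigeon:
  fixes F :: "'a filter"
  assumes "F \<noteq> bot" "finite \<W>" "eventually (\<lambda>e. \<exists>W\<in>\<W>. Q W e) F"
  shows "\<exists>W\<in>\<W>. frequently (Q W) F"
proof (rule ccontr)
  assume "\<not> ?thesis"
  then have "\<forall>W\<in>\<W>. eventually (\<lambda>e. \<not> Q W e) F" by (simp add: frequently_def)
  then have "eventually (\<lambda>e. \<forall>W\<in>\<W>. \<not> Q W e) F" using assms(2) by (simp add: eventually_ball_finite)
  with assms(3) have "eventually (\<lambda>e. False) F" by (auto elim: eventually_rev_mp)
  with assms(1) show False by (simp add: eventually_False)
qed

lemma mv_lexpt:
  fixes A :: "real^'n^'m"
  assumes "\<forall>j\<in>{1..<k}. A *v u j = 0" "1 \<le> k"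
  shows "A *v lexpt x k u e = A *v x + (e^k) *\<^sub>R (A *v u k)"
proof -
  have "A *v lexpt x k u e = A *v x + (\<Sum>j=1..k. (e^j) *\<^sub>R (A *v u j))"
    unfolding lexpt_def
    by (simp add: matrix_vector_right_distrib linear_sum[OF matrix_vector_mul_linear] linear_scale[OF matrix_vector_mul_linear])
  also have "(\<Sum>j=1..k. (e^j) *\<^sub>R (A *v u j)) = (\<Sum>j\<in>{k}. (e^j) *\<^sub>R (A *v u j))"
    using assms by (intro sum.mono_neutral_right) auto
  finally show ?thesis by simp
qed


theorem mainTheorem4:
  fixes P X :: "(real^'n) set" and \<eta> :: "real^'n \<Rightarrow> real^2"
  assumes "rational_polyhedron P" and "X \<subseteq> P" and "closed X" and "Z_map P \<eta>"
    and "\<exists>y u. rationally_outgoing (\<eta> ` X) y 1 u"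
  shows "\<exists>k\<in>{1..CARD('n) - 1}. \<exists>x u. rationally_outgoing X x k u"
proof -
  note XP = assms(2) and clX = assms(3)
  obtain y U where RO: "rationally_outgoing (\<eta> ` X) y 1 U" using assms(5) by blast
  obtain S2 F2 lam2 where S2: "rational_simplex S2" and F2: "F2 face_of S2"
    and lam2: "\<forall>j\<in>{1..1}. lam2 j > (0::real)" and C2S: "C_set y 1 U lam2 \<subseteq> S2"
    and C2F: "\<not> C_set y 1 U lam2 \<subseteq> F2" and F2X: "F2 \<inter> \<eta> ` X = S2 \<inter> \<eta> ` X"
    using RO unfolding rationally_outgoing_def by blast
  obtain ys where ysX: "\<forall>i. ys i \<in> \<eta> ` X" and ysl: "ys \<longlonglongrightarrow> y"
    and ysn: "\<forall>i. ys i - y \<notin> span (U ` {1..1})"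
    and ysc: "\<forall>s\<in>{1..1}. (\<lambda>i. (ys i - y - proj_first U (s - 1) (ys i - y)) /\<^sub>R
                          norm (ys i - y - proj_first U (s - 1) (ys i - y))) \<longlonglongrightarrow> U s"
    and onU: "orthonormal_tuple 1 U"
    using RO unfolding rationally_outgoing_def k_tangent_def by blast
  define w where "w = U 1"
  define l2 where "l2 = lam2 1"
  have l2: "l2 > 0" using lam2 by (simp add: l2_def)
  have pf0: "proj_first U 0 v = v - v + 0" for v by (simp add: proj_first_def)
  have ysc': "(\<lambda>i. (ys i - y) /\<^sub>R norm (ys i - y)) \<longlonglongrightarrow> w"
    using ysc by (simp add: w_def proj_first_def)
  have ysn': "\<forall>i. ys i - y \<notin> span {w}" using ysn by (simp add: w_def)
  have C2eq: "C_set y 1 U lam2 = convex hull {y, y + l2 *\<^sub>R w}"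
    unfolding C_set_def set_le1 by (simp add: w_def l2_def)
  have "\<forall>i. \<exists>z. z \<in> X \<and> \<eta> z = ys i"
  proof
    fix i
    have "ys i \<in> \<eta> ` X" using ysX by blast
    then obtain z where "z \<in> X" "ys i = \<eta> z" by (rule imageE)
    then show "\<exists>z. z \<in> X \<and> \<eta> z = ys i" by (intro exI[of _ z] conjI) simp_all
  qed
  from choice[OF this] obtain xs where xs: "\<forall>i. xs i \<in> X \<and> \<eta> (xs i) = ys i" by blast
  obtain K where K: "triangulation K P" and KA: "\<forall>S\<in>K. \<exists>(A::real^'n^2) (b::real^2).
        (\<forall>i j. A $ i $ j \<in> \<int>) \<and> (\<forall>i. b $ i \<in> \<int>) \<and> (\<forall>x\<in>S. \<eta> x = A *v x + b)"
    using assms(4) unfolding Z_map_def by blast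
  have finK: "finite K" and ratK: "\<forall>S\<in>K. rational_simplex S" and UK: "\<Union>K = P"
    using K unfolding triangulation_def by auto
  have "\<forall>i. \<exists>T\<in>K. xs i \<in> T" using xs XP UK by blast
  from finite_pigeon_nat[OF finK this] obtain T where TK: "T \<in> K" and infT: "infinite {i. xs i \<in> T}"
    by blast
  obtain r :: "nat \<Rightarrow> nat" where r: "strict_mono r" "\<forall>n. r n \<in> {i. xs i \<in> T}"
    using infinite_enumerate[OF infT] by auto
  obtain A :: "real^'n^2" and b :: "real^2" where Aint: "\<forall>i j. A $ i $ j \<in> \<int>" and bint: "\<forall>i. b $ i \<in> \<int>"
    and etaT: "\<forall>x\<in>T. \<eta> x = A *v x + b"
    using KA TK by blast
  obtain CT where CT: "finite CT" "\<not> affine_dependent CT" "\<forall>v\<in>CT. rational_point v" "T = convex hull CT"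
    using ratK TK unfolding rational_simplex_def by blast
  have cT: "compact T" using CT by (simp add: finite_imp_compact_convex_hull)
  have "compact (T \<inter> X)" using cT clX by (rule compact_Int_closed)
  moreover have "\<forall>n. (xs \<circ> r) n \<in> T \<inter> X" using r xs by auto
  ultimately obtain x \<rho> where x: "x \<in> T \<inter> X" and \<rho>: "strict_mono \<rho>" and xl: "((xs \<circ> r) \<circ> \<rho>) \<longlonglongrightarrow> x"
    by (rule seq_compactE[OF compact_imp_seq_compact])
  define \<phi> where "\<phi> = r \<circ> \<rho>"
  have \<phi>: "strict_mono \<phi>" unfolding \<phi>_def using r(1) \<rho> by (rule strict_mono_o)
  have xsT: "xs (\<phi> i) \<in> T" for i using r unfolding \<phi>_def by auto
  have xl': "(\<lambda>i. xs (\<phi> i)) \<longlonglongrightarrow> x" using xl by (simp add: \<phi>_def o_def)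
  have ys\<phi>: "ys (\<phi> i) = A *v xs (\<phi> i) + b" for i
  proof -
    have "ys (\<phi> i) = \<eta> (xs (\<phi> i))" using xs by simp
    also have "\<dots> = A *v xs (\<phi> i) + b" using etaT xsT by blast
    finally show ?thesis .
  qed
  have "(\<lambda>i. ys (\<phi> i)) \<longlonglongrightarrow> A *v x + b"
    unfolding ys\<phi> by (intro tendsto_add tendsto_const mv_tendsto xl')
  moreover have "(\<lambda>i. ys (\<phi> i)) \<longlonglongrightarrow> y" using LIMSEQ_subseq_LIMSEQ[OF ysl \<phi>] by (simp add: o_def)
  ultimately have yAx: "y = A *v x + b" using LIMSEQ_unique by blast
  have etax: "\<eta> x = y" using x etaT yAx by auto
  define d where "d i = xs (\<phi> i) - x" for i
  have Ad: "A *v d i = ys (\<phi> i) - y" for i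
    unfolding d_def ys\<phi> yAx by (simp add: matrix_vector_mult_diff_distrib)
  have hA: "\<forall>i. A *v d i \<notin> span {w}" using ysn' Ad by simp
  have hlim: "(\<lambda>i. (A *v d i) /\<^sub>R norm (A *v d i)) \<longlonglongrightarrow> w"
    unfolding Ad using LIMSEQ_subseq_LIMSEQ[OF ysc' \<phi>] by (simp add: o_def)
  obtain k \<sigma> u where fd: "found d A w k \<sigma> u" and kn: "k < CARD('n)"
    using extract_dirs[OF hA hlim] by blast
  have k1: "1 \<le> k" and \<sigma>: "strict_mono \<sigma>" and onu: "orthonormal_tuple k u"
    and ker: "\<forall>j\<in>{1..<k}. A *v u j = 0" and Auk0: "A *v u k \<noteq> 0"
    and Auk: "A *v u k = norm (A *v u k) *\<^sub>R w" and nsp: "\<forall>i. d (\<sigma> i) \<notin> span (u ` {1..k})"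
    and cvg: "\<forall>s\<in>{1..k}. (\<lambda>i. nres u (s-1) (d (\<sigma> i))) \<longlonglongrightarrow> u s"
    using fd unfolding found_def by auto
  define c where "c = norm (A *v u k)"
  have c: "c > 0" using Auk0 by (simp add: c_def)
  have img: "A *v lexpt x k u e + b = y + (e^k * c) *\<^sub>R w" for e
    using mv_lexpt[OF ker k1, of x e] Auk yAx by (simp add: c_def[symmetric] algebra_simps)
  have KT: "k_tangent X x k u"
    unfolding k_tangent_def
  proof (intro conjI exI[of _ "\<lambda>i. xs (\<phi> (\<sigma> i))"])
    show "orthonormal_tuple k u" by (rule onu)
    show "\<forall>i. xs (\<phi> (\<sigma> i)) \<in> X" using xs by auto
    show "(\<lambda>i. xs (\<phi> (\<sigma> i))) \<longlonglongrightarrow> x" using LIMSEQ_subseq_LIMSEQ[OF xl' \<sigma>] by (simp add: o_def)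
    show "\<forall>i. xs (\<phi> (\<sigma> i)) - x \<notin> span (u ` {1..k})" using nsp by (simp add: d_def)
    show "\<forall>s\<in>{1..k}. (\<lambda>i. (xs (\<phi> (\<sigma> i)) - x - proj_first u (s - 1) (xs (\<phi> (\<sigma> i)) - x)) /\<^sub>R
                          norm (xs (\<phi> (\<sigma> i)) - x - proj_first u (s - 1) (xs (\<phi> (\<sigma> i)) - x))) \<longlonglongrightarrow> u s"
      using cvg by (simp add: nres_def d_def)
  qed
  have polyT: "polyhedron T" using ratK TK by (simp add: rational_simplex_polyhedron)
  have evT: "eventually (\<lambda>e. lexpt x k u e \<in> T) (at_right 0)"
  proof (rule polyhedron_lexpt[OF polyT])
    show "x \<in> T" using x by simp
    fix a bb assume Ta: "T \<subseteq> {z. a \<bullet> z \<le> bb}" and ax: "a \<bullet> x = bb"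
    have "\<forall>i. a \<bullet> d (\<sigma> i) \<le> 0"
      using Ta xsT ax by (auto simp: d_def inner_diff_right)
    then show "lexok k (\<lambda>j. a \<bullet> u j)" by (rule lex_from_seq[where d=d and \<sigma>=\<sigma>, OF onu cvg])
  qed
  have evS2: "eventually (\<lambda>e. A *v lexpt x k u e + b \<in> S2) (at_right 0)"
  proof -
    have "((\<lambda>e::real. e^k * c) \<longlongrightarrow> 0^k * c) (at_right 0)" by (intro tendsto_intros)
    then have "((\<lambda>e::real. e^k * c) \<longlongrightarrow> 0) (at_right 0)" using k1 by (simp add: power_0_left)
    then have ev1: "eventually (\<lambda>e. e^k * c < l2) (at_right 0)" using l2 by (rule order_tendstoD)
    have ev2: "eventually (\<lambda>e::real. e > 0) (at_right 0)" by (simp add: eventually_at_right_less)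
    show ?thesis using ev1 ev2
    proof eventually_elim
      case (elim e)
      define t where "t = e^k * c"
      have t: "0 \<le> t" "t \<le> l2" using elim c unfolding t_def by auto
      have "y + t *\<^sub>R w = (1 - t/l2) *\<^sub>R y + (t/l2) *\<^sub>R (y + l2 *\<^sub>R w)"
        using l2 by (simp add: algebra_simps)
      also have "\<dots> \<in> convex hull {y, y + l2 *\<^sub>R w}"
        using t l2 by (intro convexD[OF convex_convex_hull] hull_subset[THEN subsetD]) (auto simp: divide_simps)
      finally show ?case using C2S C2eq img t_def by auto
    qed
  qed
  define Q where "Q = {z \<in> T. A *v z + b \<in> S2}"
  obtain W2 where W2: "finite W2" "\<not> affine_dependent W2" "\<forall>v\<in>W2. rational_point v" "S2 = convex hull W2"
    using S2 unfolding rational_simplex_def by blast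
  obtain V where V: "finite V" "\<forall>v\<in>V. rational_point v" "Q = convex hull V"
    using Q_rational_hull[OF CT(1,3) W2(1,3) Aint bint] unfolding Q_def CT(4) W2(4) by blast
  have evQ: "eventually (\<lambda>e. lexpt x k u e \<in> Q) (at_right 0)"
    using evT evS2 by eventually_elim (simp add: Q_def)
  define \<W> where "\<W> = {W. W \<subseteq> V \<and> \<not> affine_dependent W}"
  have fW: "finite \<W>" unfolding \<W>_def using V(1) by simp
  have "eventually (\<lambda>e. \<exists>W\<in>\<W>. lexpt x k u e \<in> convex hull W) (at_right 0)"
    using evQ
  proof eventually_elim
    case (elim e)
    then show ?case using caratheodory_indep[OF V(1)] V(3) unfolding \<W>_def by blast
  qed
  from frequently_pigeon[OF _ fW this] obtain W0 where W0: "W0 \<in> \<W>"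
    and fr: "frequently (\<lambda>e. lexpt x k u e \<in> convex hull W0) (at_right 0)" by auto
  define S where "S = convex hull W0"
  have W0V: "W0 \<subseteq> V" and indW0: "\<not> affine_dependent W0" using W0 by (auto simp: \<W>_def)
  have rS: "rational_simplex S"
    unfolding rational_simplex_def S_def using W0V indW0 V(1,2) finite_subset by blast
  have SQ: "S \<subseteq> Q" unfolding S_def V(3) using W0V by (rule hull_mono)
  have cS: "convex S" unfolding S_def by simp
  have evS: "eventually (\<lambda>e. \<forall>m\<le>k. lexpt x m u e \<in> S) (at_right 0)"
    using prefix_polyhedron[OF rational_simplex_polyhedron[OF rS]] fr by (simp add: S_def)
  then obtain bb where bb: "bb > 0" "\<forall>e>0. e < bb \<longrightarrow> (\<forall>m\<le>k. lexpt x m u e \<in> S)"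
    unfolding eventually_at_right_field by auto
  define e0 where "e0 = bb / 2"
  have e0: "e0 > 0" "\<forall>m\<le>k. lexpt x m u e0 \<in> S" using bb by (auto simp: e0_def)
  define lam where "lam j = e0 ^ j" for j :: nat
  have Cset: "C_set x k u lam = convex hull {lexpt x m u e0 | m. m \<le> k}"
    unfolding C_set_def lexpt_def lam_def by simp
  have CS: "C_set x k u lam \<subseteq> S"
    unfolding Cset using e0(2) by (intro hull_minimal cS) auto
  have "F2 exposed_face_of S2"
    using F2 exposed_face_of_polyhedron[OF rational_simplex_polyhedron[OF S2]] by simp
  then obtain h \<beta> where hS2: "S2 \<subseteq> {z. h \<bullet> z \<le> \<beta>}" and F2eq: "F2 = S2 \<inter> {z. h \<bullet> z = \<beta>}"
    unfolding exposed_face_of_def by blast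
  define g where "g = transpose A *v h"
  have g: "g \<bullet> z = h \<bullet> (A *v z)" for z unfolding g_def by (simp add: dot_lmul_matrix)
  define F where "F = S \<inter> {z. g \<bullet> z = \<beta> - h \<bullet> b}"
  have leS: "g \<bullet> z \<le> \<beta> - h \<bullet> b" if "z \<in> S" for z
  proof -
    have "A *v z + b \<in> S2" using that SQ by (auto simp: Q_def)
    then have "h \<bullet> (A *v z + b) \<le> \<beta>" using hS2 by auto
    then show ?thesis by (simp add: g inner_add_right)
  qed
  have FS: "F face_of S" unfolding F_def by (rule face_of_Int_supporting_hyperplane_le[OF cS leS])
  have FX: "F \<inter> X = S \<inter> X"
  proof
    show "F \<inter> X \<subseteq> S \<inter> X" by (auto simp: F_def)
    show "S \<inter> X \<subseteq> F \<inter> X"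
    proof
      fix z assume z: "z \<in> S \<inter> X"
      then have zQ: "z \<in> Q" using SQ by auto
      then have ez: "\<eta> z = A *v z + b" using etaT by (auto simp: Q_def)
      have e1: "\<eta> z \<in> \<eta> ` X" using z by blast
      have e2: "\<eta> z \<in> S2" using zQ ez by (simp add: Q_def)
      have "\<eta> z \<in> S2 \<inter> \<eta> ` X" using e1 e2 by (rule IntI[rotated])
      then have "\<eta> z \<in> F2" using F2X by blast
      then have "h \<bullet> (A *v z + b) = \<beta>" using F2eq ez by auto
      then show "z \<in> F \<inter> X" using z by (auto simp: F_def g inner_add_right)
    qed
  qed
  have yS2: "y \<in> S2" using C2S C2eq hull_subset[of "{y, y + l2 *\<^sub>R w}" convex] by auto
  have yF2: "y \<in> F2" using yS2 x etax F2X by blast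
  have hy: "h \<bullet> y = \<beta>" using yF2 F2eq by auto
  have hw: "h \<bullet> w < 0"
  proof -
    have y2: "y + l2 *\<^sub>R w \<in> S2" using C2S C2eq hull_subset[of "{y, y + l2 *\<^sub>R w}" convex] by auto
    then have "h \<bullet> (y + l2 *\<^sub>R w) \<le> \<beta>" using hS2 by auto
    then have "l2 * (h \<bullet> w) \<le> 0" using hy by (simp add: inner_add_right)
    then have le: "h \<bullet> w \<le> 0" using l2 by (simp add: mult_le_0_iff)
    show ?thesis
    proof (rule ccontr)
      assume "\<not> h \<bullet> w < 0"
      then have "h \<bullet> w = 0" using le by simp
      then have "y + l2 *\<^sub>R w \<in> F2" using y2 hy F2eq by (simp add: inner_add_right)
      then have "convex hull {y, y + l2 *\<^sub>R w} \<subseteq> F2"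
        using yF2 face_of_imp_convex[OF F2] by (intro hull_minimal) auto
      then show False using C2F C2eq by simp
    qed
  qed
  have pkC: "lexpt x k u e0 \<in> C_set x k u lam" unfolding Cset by (rule hull_subset[THEN subsetD]) auto
  have "g \<bullet> lexpt x k u e0 = h \<bullet> (A *v lexpt x k u e0 + b) - h \<bullet> b" by (simp add: g inner_add_right)
  also have "\<dots> = \<beta> + (e0^k * c) * (h \<bullet> w) - h \<bullet> b" unfolding img by (simp add: inner_add_right hy)
  also have "\<dots> < \<beta> - h \<bullet> b"
    using hw e0(1) c by (simp add: mult_pos_neg)
  finally have "lexpt x k u e0 \<notin> F" by (auto simp: F_def)
  then have CF: "\<not> C_set x k u lam \<subseteq> F" using pkC by blast
  have lam0: "\<forall>j\<in>{1..k}. lam j > 0" using e0 by (simp add: lam_def)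
  have "rationally_outgoing X x k u"
    unfolding rationally_outgoing_def using KT rS FS lam0 CS CF FX by blast
  moreover have "k \<in> {1..CARD('n) - 1}" using k1 kn by auto
  ultimately show ?thesis by blast
qed


end
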